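(* Let $X$ be a finite quandle with connected components $C_1,\dots,C_k$. There exists $N$ (depending on $X$) such that the following holds. Let $s=(x_1,\dots,x_n)\in X^n$ with $\langle x_1,\dots,x_n\rangle=X$, let $D_j=\{1\le i\le n:x_i\in C_j\}$ and $n_j=|D_j|$, and suppose $n_1,\dots,n_k\ge N$. Then the image in $S_n$ of the stabilizer of $s$ in $B_n$ equals $S_{n_1}\times\dots\times S_{n_k}$.
   Context: A quandle is a set $X$ with an operation $x^y$ such that $x\mapsto x^y$ is bijective for each $y$, $(z^x)^y=(z^y)^{x^y}$ and $x^x=x$; its connected components are the classes of the smallest equivalence relation with $x\sim x^y$; $\langle x_1,\dots,x_n\rangle=X$ means no proper subset closed under the operation contains all $x_i$. $B_n$ acts on $X^n$ from the right by $(\dots,x_i,x_{i+1},\dots)^{\sigma_i}=(\dots,x_{i+1},x_i^{x_{i+1}},\dots)$, and $B_n\to S_n$ sends $\sigma_i\mapsto(i\ i+1)$. $S_{n_1}\times\dots\times S_{n_k}$ is identified with $\{\sigma\in S_n:\sigma(D_j)=D_j\ \forall j\}$. *)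

theory Defs
  imports "HOL-Combinatorics.Combinatorics"
begin

text \<open>A quandle on the carrier X with operation op, where op x y stands for x^y.\<close>
definition quandle :: "'a set \<Rightarrow> ('a \<Rightarrow> 'a \<Rightarrow> 'a) \<Rightarrow> bool" where
  "quandle X op \<longleftrightarrow>
     (\<forall>x\<in>X. \<forall>y\<in>X. op x y \<in> X) \<and>
     (\<forall>y\<in>X. bij_betw (\<lambda>x. op x y) X X) \<and>
     (\<forall>x\<in>X. \<forall>y\<in>X. \<forall>z\<in>X. op (op z x) y = op (op z y) (op x y)) \<and>
     (\<forall>x\<in>X. op x x = x)"

definition qstep :: "'a set \<Rightarrow> ('a \<Rightarrow> 'a \<Rightarrow> 'a) \<Rightarrow> 'a rel" where
  "qstep X op = {(x, op x y) | x y. x \<in> X \<and> y \<in> X}"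

definition qcomponents :: "'a set \<Rightarrow> ('a \<Rightarrow> 'a \<Rightarrow> 'a) \<Rightarrow> 'a set set" where
  "qcomponents X op = X // ((qstep X op \<union> (qstep X op)\<inverse>)\<^sup>*)"

definition qgenerates :: "'a set \<Rightarrow> ('a \<Rightarrow> 'a \<Rightarrow> 'a) \<Rightarrow> 'a list \<Rightarrow> bool" where
  "qgenerates X op xs \<longleftrightarrow> set xs \<subseteq> X \<and>
     (\<forall>Y. Y \<subseteq> X \<and> set xs \<subseteq> Y \<and> (\<forall>a\<in>Y. \<forall>b\<in>Y. op a b \<in> Y) \<longrightarrow> Y = X)"

definition qrinv :: "'a set \<Rightarrow> ('a \<Rightarrow> 'a \<Rightarrow> 'a) \<Rightarrow> 'a \<Rightarrow> 'a \<Rightarrow> 'a" where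
  "qrinv X op b a = inv_into X (\<lambda>z. op z a) b"

text \<open>Braid words: letters (i, True) = sigma_i, (i, False) = sigma_i inverse, 0-based,
  acting on the positions i, i+1 of a tuple (a list).\<close>
type_synonym bletter = "nat \<times> bool"

definition bgen_act :: "'a set \<Rightarrow> ('a \<Rightarrow> 'a \<Rightarrow> 'a) \<Rightarrow> 'a list \<Rightarrow> bletter \<Rightarrow> 'a list" where
  "bgen_act X op s g = (case g of (i, e) \<Rightarrow>
     (if e then s[i := s ! (i+1), i+1 := op (s ! i) (s ! (i+1))]
      else s[i := qrinv X op (s ! (i+1)) (s ! i), i+1 := s ! i]))"

fun bword_act :: "'a set \<Rightarrow> ('a \<Rightarrow> 'a \<Rightarrow> 'a) \<Rightarrow> 'a list \<Rightarrow> bletter list \<Rightarrow> 'a list" where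
  "bword_act X op s [] = s"
| "bword_act X op s (g # w) = bword_act X op (bgen_act X op s g) w"

definition valid_bword :: "nat \<Rightarrow> bletter list \<Rightarrow> bool" where
  "valid_bword n w \<longleftrightarrow> (\<forall>g\<in>set w. fst g + 1 < n)"

fun bword_perm :: "bletter list \<Rightarrow> nat \<Rightarrow> nat" where
  "bword_perm [] = id"
| "bword_perm (g # w) = transpose (fst g) (fst g + 1) \<circ> bword_perm w"

definition stab_image :: "'a set \<Rightarrow> ('a \<Rightarrow> 'a \<Rightarrow> 'a) \<Rightarrow> 'a list \<Rightarrow> (nat \<Rightarrow> nat) set" where
  "stab_image X op s = {bword_perm w | w. valid_bword (length s) w \<and> bword_act X op s w = s}"

definition posin :: "'a list \<Rightarrow> 'a set \<Rightarrow> nat set" where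
  "posin s C = {i. i < length s \<and> s ! i \<in> C}"

end

theory Submission
  imports Defs
begin



locale qctx =
  fixes X :: "'a set" and op :: "'a \<Rightarrow> 'a \<Rightarrow> 'a"
  assumes finX: "finite X" and qd: "quandle X op"
begin

lemma opX: "x \<in> X \<Longrightarrow> y \<in> X \<Longrightarrow> op x y \<in> X"
  using qd unfolding quandle_def by blast
lemma bijr: "y \<in> X \<Longrightarrow> bij_betw (\<lambda>x. op x y) X X"
  using qd unfolding quandle_def by blast
lemma sd: "x \<in> X \<Longrightarrow> y \<in> X \<Longrightarrow> z \<in> X \<Longrightarrow> op (op z x) y = op (op z y) (op x y)"
  using qd unfolding quandle_def by blast
lemma idem: "x \<in> X \<Longrightarrow> op x x = x"
  using qd unfolding quandle_def by blast
lemma injr: "y \<in> X \<Longrightarrow> inj_on (\<lambda>x. op x y) X"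
  using bijr[of y] unfolding bij_betw_def by simp
lemma imr: "y \<in> X \<Longrightarrow> (\<lambda>x. op x y) ` X = X"
  using bijr[of y] unfolding bij_betw_def by simp
lemma qrinv_X: "a \<in> X \<Longrightarrow> b \<in> X \<Longrightarrow> qrinv X op b a \<in> X"
  unfolding qrinv_def using inv_into_into[of b "\<lambda>z. op z a" X] imr[of a] by simp
lemma op_qrinv: "a \<in> X \<Longrightarrow> b \<in> X \<Longrightarrow> op (qrinv X op b a) a = b"
  unfolding qrinv_def using f_inv_into_f[of b "\<lambda>z. op z a" X] imr[of a] by simp
lemma qrinv_op: "a \<in> X \<Longrightarrow> z \<in> X \<Longrightarrow> qrinv X op (op z a) a = z"
  unfolding qrinv_def using inv_into_f_f[OF injr[of a], of z] by simp

abbreviation rp :: "'a \<Rightarrow> nat \<Rightarrow> 'a \<Rightarrow> 'a" where "rp y k \<equiv> (\<lambda>x. op x y) ^^ k"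

lemma rp_X: "x \<in> X \<Longrightarrow> y \<in> X \<Longrightarrow> rp y k x \<in> X"
  by (induct k) (auto intro: opX)

lemma order_one: assumes y: "y \<in> X" shows "\<exists>n>0. \<forall>x\<in>X. rp y n x = x"
proof -
  define p where "p = (\<lambda>x. if x \<in> X then op x y else x)"
  have bp: "bij_betw p X X"
    using bijr[OF y] unfolding p_def by (rule bij_betw_cong[THEN iffD1, rotated]) auto
  have "p permutes X"
    by (rule bij_imp_permutes[OF bp]) (simp add: p_def)
  hence "permutation p" using finX permutation_permutes by blast
  then obtain n where n: "p ^^ n = id" "n > 0" by (rule permutation_is_nilpotent)
  have eq: "x \<in> X \<Longrightarrow> (p ^^ k) x = rp y k x" for x k
  proof (induct k)
    case 0 then show ?case by simp
  next
    case (Suc k)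
    have "rp y k x \<in> X" using Suc rp_X y by blast
    then show ?case using Suc by (simp add: p_def)
  qed
  show ?thesis using n eq by (metis id_apply)
qed

lemma rp_mult: "(\<forall>x\<in>X. rp y n x = x) \<Longrightarrow> x \<in> X \<Longrightarrow> rp y (n * k) x = x"
proof (induct k)
  case 0 then show ?case by simp
next
  case (Suc k)
  have "rp y (n * Suc k) x = rp y n (rp y (n * k) x)"
    by (simp add: funpow_add add.commute)
  then show ?case using Suc by simp
qed

lemma order_all: "\<exists>K>0. \<forall>y\<in>X. \<forall>x\<in>X. rp y K x = x"
proof -
  have "finite A \<Longrightarrow> A \<subseteq> X \<Longrightarrow> \<exists>K>0. \<forall>y\<in>A. \<forall>x\<in>X. rp y K x = x" for A
  proof (induct A rule: finite_induct)
    case empty then show ?case by (intro exI[of _ 1]) simp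
  next
    case (insert y A)
    have "A \<subseteq> X" using insert.prems by auto
    then obtain K1 where K1: "K1 > 0" "\<forall>z\<in>A. \<forall>x\<in>X. rp z K1 x = x" using insert(3) by auto
    obtain n where n: "n > 0" "\<forall>x\<in>X. rp y n x = x" using order_one[of y] insert.prems by auto
    have "\<forall>z\<in>insert y A. \<forall>x\<in>X. rp z (K1 * n) x = x"
      using K1 n rp_mult by (metis insert_iff mult.commute)
    then show ?case using K1 n by (intro exI[of _ "K1 * n"]) simp
  qed
  then show ?thesis using finX by blast
qed

definition ord :: nat where "ord = (SOME K. K > 0 \<and> (\<forall>y\<in>X. \<forall>x\<in>X. rp y K x = x))"

lemma ord_pos: "ord > 0" and ord_id: "y \<in> X \<Longrightarrow> x \<in> X \<Longrightarrow> rp y ord x = x"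
  using someI_ex[OF order_all] unfolding ord_def by auto

lemma rp_inv: "x \<in> X \<Longrightarrow> y \<in> X \<Longrightarrow> rp y (ord - 1) (op x y) = x"
proof -
  assume a: "x \<in> X" "y \<in> X"
  have "rp y (ord - 1) (op x y) = rp y (Suc (ord - 1)) x"
    by (simp only: funpow_Suc_right comp_def)
  also have "\<dots> = x" using ord_pos ord_id a by simp
  finally show ?thesis .
qed

definition tstep :: "(nat \<times> 'a) list \<Rightarrow> bletter \<Rightarrow> (nat \<times> 'a) list" where
  "tstep T g = (case g of (i, e) \<Rightarrow>
     (if e then T[i := T ! (i+1), i+1 := (fst (T ! i), op (snd (T ! i)) (snd (T ! (i+1))))]
      else T[i := (fst (T ! (i+1)), qrinv X op (snd (T ! (i+1))) (snd (T ! i))), i+1 := T ! i]))"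

fun tact :: "(nat \<times> 'a) list \<Rightarrow> bletter list \<Rightarrow> (nat \<times> 'a) list" where
  "tact T [] = T"
| "tact T (g # w) = tact (tstep T g) w"

lemma tstep_midT[simp]: "tstep (A @ a # b # C) (length A, True) = A @ b # (fst a, op (snd a) (snd b)) # C"
  by (simp add: tstep_def list_update_append nth_append)
lemma tstep_midF[simp]: "tstep (A @ a # b # C) (length A, False) = A @ (fst b, qrinv X op (snd b) (snd a)) # a # C"
  by (simp add: tstep_def list_update_append nth_append)

lemma split4: "i + 1 < length T \<Longrightarrow> T = take i T @ T!i # T!(i+1) # drop (i+2) T"
proof -
  assume i: "i + 1 < length T"
  have "drop i T = T!i # drop (Suc i) T" using i by (simp add: Cons_nth_drop_Suc)
  moreover have "drop (Suc i) T = T!(i+1) # drop (i+2) T" using i by (simp add: Cons_nth_drop_Suc)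
  ultimately show ?thesis by (metis append_take_drop_id)
qed

lemma split4': "i + 1 < length T \<Longrightarrow> \<exists>A a b C. T = A @ a # b # C \<and> length A = i"
  using split4[of i T] by (intro exI[of _ "take i T"] exI[of _ "T!i"] exI[of _ "T!(i+1)"] exI[of _ "drop (i+2) T"]) simp

lemma length_tstep[simp]: "length (tstep T g) = length T"
  by (cases g) (simp add: tstep_def)
lemma length_tact[simp]: "length (tact T w) = length T"
  by (induct w arbitrary: T) auto
lemma tact_append: "tact T (w1 @ w2) = tact (tact T w1) w2"
  by (induct w1 arbitrary: T) auto

definition reach :: "(nat \<times> 'a) list \<Rightarrow> (nat \<times> 'a) list \<Rightarrow> bool" where
  "reach T T' \<longleftrightarrow> (\<exists>w. valid_bword (length T) w \<and> tact T w = T')"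

lemma reach_refl[simp]: "reach T T"
  unfolding reach_def valid_bword_def by (intro exI[of _ "[]"]) simp

lemma reach_trans: "reach T1 T2 \<Longrightarrow> reach T2 T3 \<Longrightarrow> reach T1 T3"
  unfolding reach_def valid_bword_def
  by (metis Un_iff length_tact set_append tact_append)

lemma reach_length: "reach T T' \<Longrightarrow> length T' = length T"
  unfolding reach_def by auto

lemma reach_step: "i + 1 < length T \<Longrightarrow> reach T (tstep T (i, e))"
  unfolding reach_def valid_bword_def by (intro exI[of _ "[(i,e)]"]) simp

lemma reach_sigma: "reach (A @ a # b # C) (A @ b # (fst a, op (snd a) (snd b)) # C)"
  using reach_step[of "length A" "A @ a # b # C" True] by simp
lemma reach_sigmai: "reach (A @ a # b # C) (A @ (fst b, qrinv X op (snd b) (snd a)) # a # C)"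
  using reach_step[of "length A" "A @ a # b # C" False] by simp

lemma tact_induct:
  assumes "valid_bword (length T) w" "Q T"
    and step: "\<And>A a b C e. Q (A @ a # b # C) \<Longrightarrow> Q (tstep (A @ a # b # C) (length A, e))"
  shows "Q (tact T w)"
  using assms(1,2)
proof (induct w arbitrary: T)
  case Nil then show ?case by simp
next
  case (Cons g w)
  obtain i e where g: "g = (i, e)" by fastforce
  have i: "i + 1 < length T" using Cons(2) g unfolding valid_bword_def by auto
  obtain A a b C where T: "T = A @ a # b # C" and lA: "length A = i" using split4'[OF i] by blast
  have "Q (tstep T g)" using step[of A a b C e] Cons(3) unfolding T g lA[symmetric] by simp
  moreover have "valid_bword (length (tstep T g)) w" using Cons(2) unfolding valid_bword_def by simp
  ultimately show ?case using Cons(1) g by simp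
qed

lemma reach_induct[consumes 1, case_names init step]:
  assumes "reach T T'" "Q T"
    and "\<And>A a b C e. Q (A @ a # b # C) \<Longrightarrow> Q (tstep (A @ a # b # C) (length A, e))"
  shows "Q T'"
proof -
  obtain w where "valid_bword (length T) w" "tact T w = T'" using assms(1) unfolding reach_def by blast
  then show ?thesis using tact_induct[of T w Q] assms(2,3) by blast
qed

definition inX :: "(nat \<times> 'a) list \<Rightarrow> bool" where
  "inX T \<longleftrightarrow> (\<forall>e\<in>set T. snd e \<in> X)"

lemma inX_append[simp]: "inX (A @ B) \<longleftrightarrow> inX A \<and> inX B"
  unfolding inX_def by auto
lemma inX_Cons[simp]: "inX (a # B) \<longleftrightarrow> snd a \<in> X \<and> inX B"
  unfolding inX_def by auto
lemma inX_Nil[simp]: "inX []"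
  unfolding inX_def by auto

lemma inX_step: "inX (A @ a # b # C) \<Longrightarrow> inX (tstep (A @ a # b # C) (length A, e))"
  by (cases e) (auto simp: opX qrinv_X)

lemma reach_inX: "reach T T' \<Longrightarrow> inX T \<Longrightarrow> inX T'"
  by (erule reach_induct) (auto intro: inX_step)

lemma tstep_inv: "inX (A @ a # b # C) \<Longrightarrow>
   tstep (tstep (A @ a # b # C) (length A, e)) (length A, \<not> e) = A @ a # b # C"
  by (cases e) (auto simp: qrinv_op op_qrinv opX qrinv_X)

definition winv :: "bletter list \<Rightarrow> bletter list" where
  "winv w = rev (map (\<lambda>g. (fst g, \<not> snd g)) w)"

lemma tact_winv: "valid_bword (length T) w \<Longrightarrow> inX T \<Longrightarrow> tact (tact T w) (winv w) = T"
proof (induct w arbitrary: T)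
  case Nil then show ?case by (simp add: winv_def)
next
  case (Cons g w)
  obtain i e where g: "g = (i, e)" by fastforce
  have i: "i + 1 < length T" using Cons(2) g unfolding valid_bword_def by auto
  obtain A a b C where T: "T = A @ a # b # C" and lA: "length A = i" using split4'[OF i] by blast
  have ix: "inX (tstep T g)" using inX_step[of A a b C e] Cons(3) unfolding T g lA[symmetric] by simp
  have v: "valid_bword (length (tstep T g)) w" using Cons(2) unfolding valid_bword_def by simp
  have "tact (tact T (g # w)) (winv (g # w)) = tstep (tact (tact (tstep T g) w) (winv w)) (i, \<not> e)"
    by (simp add: winv_def tact_append g)
  also have "\<dots> = tstep (tstep T g) (i, \<not> e)" using Cons(1)[OF v ix] by simp
  also have "\<dots> = T" using tstep_inv[of A a b C e] Cons(3) unfolding T g lA[symmetric] by simp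
  finally show ?case .
qed

lemma reach_sym: "reach T T' \<Longrightarrow> inX T \<Longrightarrow> reach T' T"
  unfolding reach_def
proof (elim exE conjE)
  fix w assume v: "valid_bword (length T) w" and t: "tact T w = T'" and ix: "inX T"
  have "valid_bword (length T') (winv w)"
    using v t unfolding valid_bword_def winv_def by auto
  then show "\<exists>w. valid_bword (length T') w \<and> tact T' w = T"
    using tact_winv[OF v ix] t by blast
qed

end



context qctx begin

lemma reach_Q:
  assumes "reach T T'" "\<forall>e\<in>set T. Q e \<and> snd e \<in> X"
    and cl: "\<And>e y. snd e \<in> X \<Longrightarrow> y \<in> X \<Longrightarrow> Q e \<Longrightarrow> Q (fst e, op (snd e) y) \<and> Q (fst e, qrinv X op (snd e) y)"
  shows "\<forall>e\<in>set T'. Q e \<and> snd e \<in> X"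
  using assms(1,2)
proof (induct rule: reach_induct)
  case (step A a b C e)
  then show ?case using cl[of a "snd b"] cl[of b "snd a"]
    by (cases e) (auto simp: opX qrinv_X)
qed

lemma reach_mset: "reach T T' \<Longrightarrow> mset (map fst T') = mset (map fst T)"
proof -
  assume r: "reach T T'"
  have "mset (map fst T') = mset (map fst T) \<and> True"
    using r
  proof (induct rule: reach_induct)
    case (step A a b C e) then show ?case by (cases e) (auto simp: add_mset_commute)
  qed simp
  then show ?thesis by simp
qed

definition cnt :: "'a set \<Rightarrow> (nat \<times> 'a) list \<Rightarrow> nat" where
  "cnt C T = length (filter (\<lambda>e. snd e \<in> C) T)"

lemma cnt_append[simp]: "cnt C (A @ B) = cnt C A + cnt C B"
  unfolding cnt_def by simp
lemma cnt_le: "cnt C A \<le> length A"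
  unfolding cnt_def by simp

lemma reach_cnt:
  assumes "reach T T'" "inX T"
    and cl: "\<And>x y. x \<in> X \<Longrightarrow> y \<in> X \<Longrightarrow> (op x y \<in> C \<longleftrightarrow> x \<in> C) \<and> (qrinv X op x y \<in> C \<longleftrightarrow> x \<in> C)"
  shows "cnt C T' = cnt C T"
proof -
  have "inX T' \<and> cnt C T' = cnt C T"
    using assms(1,2)
  proof (induct rule: reach_induct)
    case (step A a b C' e)
    then show ?case using cl[of "snd a" "snd b"] cl[of "snd b" "snd a"]
      by (cases e) (auto simp: opX qrinv_X cnt_def)
  qed simp
  then show ?thesis by simp
qed

definition qgen :: "'a set \<Rightarrow> bool" where
  "qgen S \<longleftrightarrow> (\<forall>Y. Y \<subseteq> X \<and> S \<subseteq> Y \<and> (\<forall>a\<in>Y. \<forall>b\<in>Y. op a b \<in> Y) \<longrightarrow> Y = X)"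

lemma rp_closed: "(\<forall>a\<in>Y. \<forall>b\<in>Y. op a b \<in> Y) \<Longrightarrow> u \<in> Y \<Longrightarrow> y \<in> Y \<Longrightarrow> rp y k u \<in> Y"
  by (induct k) auto

lemma qgen_mono: "qgen S \<Longrightarrow> (\<And>Y. Y \<subseteq> X \<Longrightarrow> (\<forall>a\<in>Y. \<forall>b\<in>Y. op a b \<in> Y) \<Longrightarrow> S' \<subseteq> Y \<Longrightarrow> S \<subseteq> Y) \<Longrightarrow> qgen S'"
  unfolding qgen_def by blast

lemma reach_qgen:
  assumes "reach T T'" "inX T" "qgen (snd ` set T)"
  shows "qgen (snd ` set T')"
proof -
  have "inX T' \<and> qgen (snd ` set T')"
    using assms(1)
  proof (induct rule: reach_induct)
    case init then show ?case using assms(2,3) by simp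
  next
    case (step A a b C e)
    have xa: "snd a \<in> X" and xb: "snd b \<in> X" using step by auto
    show ?case
    proof (cases e)
      case True
      have "qgen (snd ` set (A @ b # (fst a, op (snd a) (snd b)) # C))"
      proof (rule qgen_mono[OF step[THEN conjunct2]])
        fix Y assume Y: "Y \<subseteq> X" "\<forall>a\<in>Y. \<forall>b\<in>Y. op a b \<in> Y"
          "snd ` set (A @ b # (fst a, op (snd a) (snd b)) # C) \<subseteq> Y"
        have "rp (snd b) (ord - 1) (op (snd a) (snd b)) \<in> Y"
          using Y by (intro rp_closed) auto
        then have "snd a \<in> Y" using rp_inv xa xb by simp
        then show "snd ` set (A @ a # b # C) \<subseteq> Y" using Y by auto
      qed
      then show ?thesis using True inX_step[of A a b C e] step by simp
    next
      case False
      have "qgen (snd ` set (A @ (fst b, qrinv X op (snd b) (snd a)) # a # C))"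
      proof (rule qgen_mono[OF step[THEN conjunct2]])
        fix Y assume Y: "Y \<subseteq> X" "\<forall>a\<in>Y. \<forall>b\<in>Y. op a b \<in> Y"
          "snd ` set (A @ (fst b, qrinv X op (snd b) (snd a)) # a # C) \<subseteq> Y"
        have "op (qrinv X op (snd b) (snd a)) (snd a) \<in> Y"
          using Y by auto
        then have "snd b \<in> Y" using op_qrinv xa xb by simp
        then show "snd ` set (A @ a # b # C) \<subseteq> Y" using Y by auto
      qed
      then show ?thesis using False inX_step[of A a b C e] step by simp
    qed
  qed
  then show ?thesis by simp
qed

definition Rel :: "('a \<times> 'a) set" where
  "Rel = (qstep X op \<union> (qstep X op)\<inverse>)\<^sup>*"

lemma Rel_op: "x \<in> X \<Longrightarrow> y \<in> X \<Longrightarrow> (x, op x y) \<in> Rel"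
  unfolding Rel_def qstep_def by blast
lemma Rel_op': "x \<in> X \<Longrightarrow> y \<in> X \<Longrightarrow> (op x y, x) \<in> Rel"
  unfolding Rel_def qstep_def by blast
lemma Rel_qrinv: "x \<in> X \<Longrightarrow> y \<in> X \<Longrightarrow> (x, qrinv X op x y) \<in> Rel"
  using Rel_op'[of "qrinv X op x y" y] op_qrinv qrinv_X by simp
lemma Rel_sym: "(x, z) \<in> Rel \<Longrightarrow> (z, x) \<in> Rel"
  unfolding Rel_def by (metis converse_Un converse_converse converse_iff rtrancl_converse sup_commute)
lemma Rel_trans: "(x, z) \<in> Rel \<Longrightarrow> (z, u) \<in> Rel \<Longrightarrow> (x, u) \<in> Rel"
  unfolding Rel_def by (rule rtrancl_trans)
lemma Rel_X: "(x, z) \<in> Rel \<Longrightarrow> x \<in> X \<Longrightarrow> z \<in> X"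
  unfolding Rel_def
  by (induct rule: rtrancl_induct) (auto simp: qstep_def opX)

lemma comp_closed:
  assumes "C \<in> qcomponents X op" "x \<in> X" "y \<in> X"
  shows "(op x y \<in> C \<longleftrightarrow> x \<in> C) \<and> (qrinv X op x y \<in> C \<longleftrightarrow> x \<in> C)"
proof -
  obtain c where c: "C = Rel `` {c}" using assms(1) unfolding qcomponents_def Rel_def quotient_def by blast
  show ?thesis unfolding c using Rel_op[OF assms(2,3)] Rel_op'[OF assms(2,3)] Rel_qrinv[OF assms(2,3)]
      Rel_sym[OF Rel_qrinv[OF assms(2,3)]] Rel_trans by blast
qed

lemma swap_far:
  "inX (A @ (i,x) # B @ (j,x) # C) \<Longrightarrow> reach (A @ (i,x) # B @ (j,x) # C) (A @ (j,x) # B @ (i,x) # C)"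
proof (induct B arbitrary: C rule: rev_induct)
  case Nil
  have "x \<in> X" using Nil by simp
  then show ?case using reach_sigma[of A "(i,x)" "(j,x)" C] idem by simp
next
  case (snoc c B)
  have x: "x \<in> X" and cX: "snd c \<in> X" using snoc(2) by auto
  have r1: "reach (A @ (i,x) # (B @ [c]) @ (j,x) # C) (A @ (i,x) # B @ (j,x) # (fst c, op (snd c) x) # C)"
    using reach_sigma[of "A @ (i,x) # B" c "(j,x)" C] by simp
  have r2: "reach (A @ (i,x) # B @ (j,x) # (fst c, op (snd c) x) # C) (A @ (j,x) # B @ (i,x) # (fst c, op (snd c) x) # C)"
    using snoc(1)[of "(fst c, op (snd c) x) # C"] snoc(2) x cX opX by simp
  have r3: "reach (A @ (j,x) # B @ (i,x) # (fst c, op (snd c) x) # C) (A @ (j,x) # (B @ [c]) @ (i,x) # C)"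
    using reach_sigmai[of "A @ (j,x) # B" "(i,x)" "(fst c, op (snd c) x)" C] qrinv_op[OF x cX] by simp
  show ?case using r1 r2 r3 reach_trans by blast
qed

definition isblk :: "'a \<Rightarrow> (nat \<times> 'a) list \<Rightarrow> bool" where
  "isblk y Y \<longleftrightarrow> length Y = ord \<and> (\<forall>e\<in>set Y. snd e = y)"

definition rl :: "'a \<Rightarrow> (nat \<times> 'a) list \<Rightarrow> (nat \<times> 'a) list" where
  "rl c Y = map (\<lambda>e. (fst e, op (snd e) c)) Y"

lemma isblk_rl: "isblk y Y \<Longrightarrow> isblk (op y c) (rl c Y)"
  unfolding isblk_def rl_def by auto

lemma isblk_inX: "isblk y Y \<Longrightarrow> y \<in> X \<Longrightarrow> inX Y"
  unfolding isblk_def inX_def by auto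

lemma L1: "(\<forall>e\<in>set Y. snd e = y) \<Longrightarrow> reach (A @ (k,x) # Y @ C) (A @ Y @ (k, rp y (length Y) x) # C)"
proof (induct Y arbitrary: A x)
  case Nil then show ?case by simp
next
  case (Cons e Y)
  have r1: "reach (A @ (k,x) # e # Y @ C) ((A @ [e]) @ (k, op x y) # Y @ C)"
    using reach_sigma[of A "(k,x)" e "Y @ C"] Cons(2) by simp
  have r2: "reach ((A @ [e]) @ (k, op x y) # Y @ C) ((A @ [e]) @ Y @ (k, rp y (length Y) (op x y)) # C)"
    using Cons(1)[of "A @ [e]" "op x y"] Cons(2) by simp
  have "rp y (length (e # Y)) x = rp y (length Y) (op x y)"
    by (simp only: length_Cons funpow_Suc_right comp_def)
  then show ?case using reach_trans[OF r1 r2] by simp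
qed

lemma L2: "isblk y Y \<Longrightarrow> y \<in> X \<Longrightarrow> inX B \<Longrightarrow> reach (A @ B @ Y @ C) (A @ Y @ B @ C)"
proof (induct B arbitrary: C rule: rev_induct)
  case Nil then show ?case by simp
next
  case (snoc c B)
  have cX: "snd c \<in> X" using snoc by simp
  have r1: "reach ((A @ B) @ (fst c, snd c) # Y @ C) ((A @ B) @ Y @ (fst c, rp y (length Y) (snd c)) # C)"
    using L1[of Y y "A @ B" "fst c" "snd c" C] snoc(2) unfolding isblk_def by blast
  have "rp y (length Y) (snd c) = snd c" using snoc(2,3) cX ord_id unfolding isblk_def by simp
  then have r1': "reach (A @ (B @ [c]) @ Y @ C) (A @ B @ Y @ c # C)" using r1 by simp
  have r2: "reach (A @ B @ Y @ c # C) (A @ Y @ B @ c # C)"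
    using snoc(1)[of "c # C"] snoc(2-4) by simp
  show ?case using reach_trans[OF r1' r2] by simp
qed

lemma L2': "isblk y Y \<Longrightarrow> y \<in> X \<Longrightarrow> inX (A @ B @ Y @ C) \<Longrightarrow> reach (A @ Y @ B @ C) (A @ B @ Y @ C)"
  using L2 reach_sym by (metis inX_append)

lemma L3: "(\<forall>e\<in>set Y. snd e = y) \<Longrightarrow> reach (A @ Y @ (j,c) # C) (A @ (j,c) # rl c Y @ C)"
proof (induct Y arbitrary: C rule: rev_induct)
  case Nil then show ?case by (simp add: rl_def)
next
  case (snoc e Y)
  have r1: "reach (A @ Y @ e # (j,c) # C) (A @ Y @ (j,c) # (fst e, op (snd e) c) # C)"
    using reach_sigma[of "A @ Y" e "(j,c)" C] by simp
  have r2: "reach (A @ Y @ (j,c) # (fst e, op (snd e) c) # C) (A @ (j,c) # rl c Y @ (fst e, op (snd e) c) # C)"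
    using snoc by simp
  show ?case using reach_trans[OF r1 r2] by (simp add: rl_def)
qed

lemma L4:
  assumes Y: "isblk y Y" "y \<in> X" and ix: "inX (A @ Y @ D)" and w: "(j,d) \<in> set (A @ D)"
  shows "reach (A @ Y @ D) (A @ rl d Y @ D)"
proof -
  have "(j,d) \<in> set (A @ Y @ D)" using w by auto
  then have dX: "d \<in> X" using ix unfolding inX_def by fastforce
  have Y': "isblk (op y d) (rl d Y)" "op y d \<in> X" using isblk_rl[OF Y(1)] opX[OF Y(2) dX] by auto
  have ys: "\<forall>e\<in>set Y. snd e = y" using Y unfolding isblk_def by simp
  have iY: "inX Y" "inX (rl d Y)" using isblk_inX Y Y' by auto
  show ?thesis
  proof (cases "(j,d) \<in> set D")
    case True
    then obtain B C where D: "D = B @ (j,d) # C" by (meson split_list)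
    have r1: "reach (A @ Y @ B @ (j,d) # C) (A @ B @ Y @ (j,d) # C)"
      using L2'[OF Y, of A B "(j,d) # C"] ix unfolding D by simp
    have r2: "reach (A @ B @ Y @ (j,d) # C) (A @ B @ (j,d) # rl d Y @ C)"
      using L3[OF ys, of "A @ B" j d C] by simp
    have r3: "reach (A @ B @ (j,d) # rl d Y @ C) (A @ rl d Y @ B @ (j,d) # C)"
      using L2[OF Y', of "B @ [(j,d)]" A C] ix dX unfolding D by simp
    show ?thesis using reach_trans[OF reach_trans[OF r1 r2] r3] unfolding D by simp
  next
    case False
    then have "(j,d) \<in> set A" using w by simp
    then obtain A1 B where A: "A = A1 @ (j,d) # B" by (meson split_list)
    have r1: "reach (A1 @ (j,d) # B @ Y @ D) (A1 @ (j,d) # Y @ B @ D)"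
      using L2[OF Y, of B "A1 @ [(j,d)]" D] ix unfolding A by simp
    have r2: "reach (A1 @ (j,d) # Y @ B @ D) (A1 @ Y @ (j,d) # B @ D)"
      using L2[OF Y, of "[(j,d)]" A1 "B @ D"] dX by simp
    have r3: "reach (A1 @ Y @ (j,d) # B @ D) (A1 @ (j,d) # rl d Y @ B @ D)"
      using L3[OF ys, of A1 j d "B @ D"] by simp
    have r4: "reach (A1 @ (j,d) # rl d Y @ B @ D) (A1 @ (j,d) # B @ rl d Y @ D)"
      using L2'[OF Y', of "A1 @ [(j,d)]" B D] ix iY unfolding A by simp
    show ?thesis using reach_trans[OF reach_trans[OF reach_trans[OF r1 r2] r3] r4] unfolding A by simp
  qed
qed

lemma L5:
  assumes Y: "isblk y Y" "y \<in> X" and ix: "inX (A @ Y @ D)" and z: "(k,b) \<in> set (A @ D)"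
  shows "\<exists>T'. reach (A @ Y @ D) T' \<and> (k, op b y) \<in> set T' \<and> set (A @ Y @ D) - {(k,b)} \<subseteq> set T'"
proof -
  obtain e Y' where Ye: "Y = e # Y'" using Y ord_pos unfolding isblk_def by (cases Y) auto
  have ey: "snd e = y" using Y Ye unfolding isblk_def by simp
  show ?thesis
  proof (cases "(k,b) \<in> set D")
    case True
    then obtain B C where D: "D = B @ (k,b) # C" by (meson split_list)
    have r1: "reach (A @ e # Y' @ B @ (k,b) # C) (A @ B @ (k,b) # e # Y' @ C)"
      using L2'[OF Y, of A "B @ [(k,b)]" C] ix unfolding D Ye by simp
    have r2: "reach (A @ B @ (k,b) # e # Y' @ C) (A @ B @ e # (k, op b y) # Y' @ C)"
      using reach_sigma[of "A @ B" "(k,b)" e "Y' @ C"] ey by simp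
    have "reach (A @ Y @ D) (A @ B @ e # (k, op b y) # Y' @ C)"
      using reach_trans[OF r1 r2] unfolding D Ye by simp
    then show ?thesis unfolding D Ye by (intro exI[of _ "A @ B @ e # (k, op b y) # Y' @ C"]) auto
  next
    case False
    then have "(k,b) \<in> set A" using z by simp
    then obtain A1 B where A: "A = A1 @ (k,b) # B" by (meson split_list)
    have r1: "reach (A1 @ (k,b) # B @ e # Y' @ D) (A1 @ (k,b) # e # Y' @ B @ D)"
      using L2[OF Y, of B "A1 @ [(k,b)]" D] ix unfolding A Ye by simp
    have r2: "reach (A1 @ (k,b) # e # Y' @ B @ D) (A1 @ e # (k, op b y) # Y' @ B @ D)"
      using reach_sigma[of A1 "(k,b)" e "Y' @ B @ D"] ey by simp
    have "reach (A @ Y @ D) (A1 @ e # (k, op b y) # Y' @ B @ D)"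
      using reach_trans[OF r1 r2] unfolding A Ye by simp
    then show ?thesis unfolding A Ye by (intro exI[of _ "A1 @ e # (k, op b y) # Y' @ B @ D"]) auto
  qed
qed

lemma gather:
  "m \<le> length (filter (\<lambda>e. snd e = y) T) \<Longrightarrow>
   \<exists>Y R. reach (P @ T) (P @ Y @ R) \<and> length Y = m \<and> (\<forall>e\<in>set Y. snd e = y)"
proof (induct T arbitrary: P m)
  case Nil then show ?case by (intro exI[of _ "[]"]) simp
next
  case (Cons c T)
  show ?case
  proof (cases "snd c = y")
    case True
    show ?thesis
    proof (cases m)
      case 0 then show ?thesis by (intro exI[of _ "[]"] exI[of _ "c # T"]) simp
    next
      case (Suc m')
      then obtain Y R where "reach ((P @ [c]) @ T) ((P @ [c]) @ Y @ R)" "length Y = m'" "\<forall>e\<in>set Y. snd e = y"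
        using Cons(1)[of m' "P @ [c]"] Cons(2) True by auto
      then show ?thesis using Suc True by (intro exI[of _ "c # Y"] exI[of _ R]) simp
    qed
  next
    case False
    then obtain Y R where r: "reach ((P @ [c]) @ T) ((P @ [c]) @ Y @ R)" and Y: "length Y = m" "\<forall>e\<in>set Y. snd e = y"
      using Cons(1)[of m "P @ [c]"] Cons(2) by auto
    have "reach (P @ (fst c, snd c) # Y @ R) (P @ Y @ (fst c, rp y (length Y) (snd c)) # R)"
      using L1[OF Y(2)] by blast
    then have "reach (P @ c # T) (P @ Y @ (fst c, rp y (length Y) (snd c)) # R)"
      using r reach_trans by fastforce
    then show ?thesis using Y by blast
  qed
qed

lemma count_sum: "finite C \<Longrightarrow> length (filter (\<lambda>e. snd e \<in> C) R) = (\<Sum>y\<in>C. length (filter (\<lambda>e. snd e = y) R))"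
proof (induct R)
  case Nil then show ?case by simp
next
  case (Cons e R)
  have "(\<Sum>y\<in>C. length (filter (\<lambda>e'. snd e' = y) (e # R))) =
        (\<Sum>y\<in>C. (if snd e = y then 1 else 0) + length (filter (\<lambda>e'. snd e' = y) R))"
    by (intro sum.cong) auto
  also have "\<dots> = (\<Sum>y\<in>C. (if snd e = y then 1 else 0)) + (\<Sum>y\<in>C. length (filter (\<lambda>e'. snd e' = y) R))"
    by (simp add: sum.distrib)
  also have "(\<Sum>y\<in>C. (if snd e = y then 1 else 0)) = (if snd e \<in> C then 1 else (0::nat))"
    using Cons(2) by (simp add: sum.delta)
  finally show ?case using Cons by simp
qed

lemma pigeon:
  assumes "finite C" "C \<noteq> {}" "length (filter (\<lambda>e. snd e \<in> C) R) \<ge> card C * m"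
  shows "\<exists>y\<in>C. length (filter (\<lambda>e. snd e = y) R) \<ge> m"
proof (rule ccontr)
  assume "\<not> ?thesis"
  then have lt: "\<forall>y\<in>C. length (filter (\<lambda>e. snd e = y) R) < m" by auto
  have "(\<Sum>y\<in>C. length (filter (\<lambda>e. snd e = y) R)) < (\<Sum>y\<in>C. m)"
    using assms(1,2) lt by (intro sum_strict_mono) auto
  moreover have "length (filter (\<lambda>e. snd e \<in> C) R) = (\<Sum>y\<in>C. length (filter (\<lambda>e. snd e = y) R))"
    using count_sum[OF assms(1)] by blast
  ultimately show False using assms(3) by (simp add: mult.commute)
qed

end



context qctx begin

definition Pos :: "'a set \<Rightarrow> ('a \<times> 'a) set" where
  "Pos S = {(u, op u d) | u d. u \<in> X \<and> d \<in> S}"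

lemma gen_Rel:
  assumes SX: "S \<subseteq> X" and g: "qgen S" and xz: "(x, z) \<in> Rel"
  shows "(x, z) \<in> (Pos S)\<^sup>*"
proof -
  define Z where "Z = {c \<in> X. \<forall>u\<in>X. (u, op u c) \<in> (Pos S)\<^sup>*}"
  have path: "c \<in> Z \<Longrightarrow> u \<in> X \<Longrightarrow> (u, rp c k u) \<in> (Pos S)\<^sup>*" for c u k
  proof (induct k)
    case 0 then show ?case by simp
  next
    case (Suc k)
    have cX: "c \<in> X" using Suc(2) Z_def by auto
    have "rp c k u \<in> X" using Suc(3) rp_X cX by blast
    then have "(rp c k u, op (rp c k u) c) \<in> (Pos S)\<^sup>*" using Suc(2) Z_def by auto
    then show ?case using Suc rtrancl_trans by fastforce
  qed
  have SZ: "S \<subseteq> Z" unfolding Z_def Pos_def using SX by (auto intro: r_into_rtrancl)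
  have cl: "\<forall>a\<in>Z. \<forall>b\<in>Z. op a b \<in> Z"
  proof (intro ballI)
    fix c d assume c: "c \<in> Z" and d: "d \<in> Z"
    have cX: "c \<in> X" "d \<in> X" using c d Z_def by auto
    show "op c d \<in> Z" unfolding Z_def
    proof (intro CollectI conjI ballI)
      show "op c d \<in> X" using cX opX by blast
      fix u assume u: "u \<in> X"
      define u' where "u' = rp d (ord - 1) u"
      have u'X: "u' \<in> X" unfolding u'_def using rp_X u cX by blast
      have "op u' d = rp d (Suc (ord - 1)) u" unfolding u'_def by simp
      then have u'd: "op u' d = u" using ord_pos ord_id[OF cX(2) u] by simp
      have e: "op u (op c d) = op (op u' c) d" using sd[OF cX u'X] u'd by simp
      have p1: "(u, u') \<in> (Pos S)\<^sup>*" using path[OF d u] unfolding u'_def .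
      have p2: "(u', op u' c) \<in> (Pos S)\<^sup>*" using c u'X Z_def by auto
      have p3: "(op u' c, op (op u' c) d) \<in> (Pos S)\<^sup>*" using d opX[OF u'X cX(1)] Z_def by auto
      show "(u, op u (op c d)) \<in> (Pos S)\<^sup>*" using p1 p2 p3 e by (metis rtrancl_trans)
    qed
  qed
  have "Z \<subseteq> X" unfolding Z_def by auto
  then have ZX: "Z = X" using g SZ cl unfolding qgen_def by blast
  show ?thesis using xz unfolding Rel_def
  proof (induct rule: rtrancl_induct)
    case base then show ?case by simp
  next
    case (step z z')
    from step(2) show ?case
    proof
      assume "(z, z') \<in> qstep X op"
      then obtain y where "z \<in> X" "y \<in> X" "z' = op z y" unfolding qstep_def by auto
      then show ?thesis using step(3) ZX Z_def by (auto intro: rtrancl_trans)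
    next
      assume "(z, z') \<in> (qstep X op)\<inverse>"
      then obtain y where zz: "z' \<in> X" "y \<in> X" "z = op z' y" unfolding qstep_def by auto
      then have "z \<in> X" using opX by blast
      have "(z, rp y (ord - 1) z) \<in> (Pos S)\<^sup>*" using path[of y z] ZX zz \<open>z \<in> X\<close> by blast
      then have "(z, z') \<in> (Pos S)\<^sup>*" using rp_inv[of z' y] zz by simp
      then show ?thesis by (rule rtrancl_trans[OF step(3)])
    qed
  qed
qed

lemma conv_path:
  assumes "(x, x') \<in> (Pos S)\<^sup>*" "S \<subseteq> snd ` set (A @ D)" "isblk x Y" "x \<in> X" "inX (A @ D)"
  shows "\<exists>Y'. reach (A @ Y @ D) (A @ Y' @ D) \<and> isblk x' Y' \<and> x' \<in> X"
  using assms(1)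
proof (induct rule: rtrancl_induct)
  case base then show ?case using assms by (intro exI[of _ Y]) simp
next
  case (step x2 x3)
  then obtain Y2 where Y2: "reach (A @ Y @ D) (A @ Y2 @ D)" "isblk x2 Y2" "x2 \<in> X" by blast
  obtain d where d: "d \<in> S" "x3 = op x2 d" using step(2) unfolding Pos_def by blast
  obtain e where e: "e \<in> set (A @ D)" "snd e = d" using d(1) assms(2) by blast
  have ix: "inX (A @ Y2 @ D)" using assms(5) isblk_inX[OF Y2(2,3)] by simp
  have "(fst e, d) \<in> set (A @ D)" using e by (metis prod.collapse)
  then have "reach (A @ Y2 @ D) (A @ rl d Y2 @ D)" using L4[OF Y2(2,3) ix] by blast
  moreover have "isblk x3 (rl d Y2)" using isblk_rl[OF Y2(2)] d by simp
  moreover have "d \<in> X" using e assms(5) unfolding inX_def by auto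
  ultimately show ?case using Y2 reach_trans d opX by blast
qed

end

locale qctx_s = qctx +
  fixes s :: "'a list"
  assumes sX: "set s \<subseteq> X" and sgen: "qgenerates X op s"
begin

definition T0 :: "(nat \<times> 'a) list" where "T0 = map (\<lambda>k. (k, s ! k)) [0..<length s]"

lemma T0_snd[simp]: "map snd T0 = s"
  unfolding T0_def by (simp add: o_def map_nth)
lemma T0_fst: "map fst T0 = [0..<length s]"
  unfolding T0_def by (simp add: o_def)
lemma T0_len[simp]: "length T0 = length s"
  unfolding T0_def by simp
lemma T0_nth: "k < length s \<Longrightarrow> T0 ! k = (k, s ! k)"
  unfolding T0_def by simp
lemma T0_inX: "inX T0"
  unfolding inX_def T0_def using sX by auto
lemma T0_gen: "qgen (snd ` set T0)"
proof -
  have "snd ` set T0 = set s" by (metis T0_snd list.set_map)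
  then show ?thesis using sgen unfolding qgen_def qgenerates_def by simp
qed

lemma reach_T0:
  assumes "reach T0 T"
  shows "inX T" "\<forall>e\<in>set T. (s ! fst e, snd e) \<in> Rel" "distinct (map fst T)"
    "set (map fst T) = {0..<length s}" "qgen (snd ` set T)" "length T = length s" "distinct T"
proof -
  have i0: "\<forall>e\<in>set T0. (s ! fst e, snd e) \<in> Rel \<and> snd e \<in> X"
    unfolding T0_def Rel_def using sX by auto
  have cl: "(s ! fst (fst e, op (snd e) y), snd (fst e, op (snd e) y)) \<in> Rel \<and>
          (s ! fst (fst e, qrinv X op (snd e) y), snd (fst e, qrinv X op (snd e) y)) \<in> Rel"
    if "snd e \<in> X" "y \<in> X" "(s ! fst e, snd e) \<in> Rel" for e y
    using Rel_trans[OF that(3) Rel_op[OF that(1,2)]] Rel_trans[OF that(3) Rel_qrinv[OF that(1,2)]] by simp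
  have q: "\<forall>e\<in>set T. (s ! fst e, snd e) \<in> Rel \<and> snd e \<in> X"
    by (rule reach_Q[OF assms i0]) (rule cl)
  then show "inX T" "\<forall>e\<in>set T. (s ! fst e, snd e) \<in> Rel" unfolding inX_def by auto
  have m: "mset (map fst T) = mset [0..<length s]" using reach_mset[OF assms] T0_fst by simp
  then show d: "distinct (map fst T)" using mset_eq_imp_distinct_iff[OF m] by simp
  show "set (map fst T) = {0..<length s}" using mset_eq_setD[OF m] by simp
  show "qgen (snd ` set T)" using reach_qgen[OF assms T0_inX T0_gen] .
  show "length T = length s" using reach_length[OF assms] by simp
  show "distinct T" using d distinct_map by blast
qed

lemma bword_perm_append: "bword_perm (w1 @ w2) = bword_perm w1 \<circ> bword_perm w2"
  by (induct w1) (auto simp: comp_assoc)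
lemma bword_act_append: "bword_act X op t (w1 @ w2) = bword_act X op (bword_act X op t w1) w2"
  by (induct w1 arbitrary: t) auto
lemma valid_append: "valid_bword m (w1 @ w2) \<longleftrightarrow> valid_bword m w1 \<and> valid_bword m w2"
  unfolding valid_bword_def by auto

lemma G_comp: "p \<in> stab_image X op s \<Longrightarrow> q \<in> stab_image X op s \<Longrightarrow> p \<circ> q \<in> stab_image X op s"
proof -
  assume p: "p \<in> stab_image X op s" and q: "q \<in> stab_image X op s"
  obtain w1 where w1: "p = bword_perm w1" "valid_bword (length s) w1" "bword_act X op s w1 = s"
    using p unfolding stab_image_def by blast
  obtain w2 where w2: "q = bword_perm w2" "valid_bword (length s) w2" "bword_act X op s w2 = s"
    using q unfolding stab_image_def by blast
  have "p \<circ> q = bword_perm (w1 @ w2)" "valid_bword (length s) (w1 @ w2)" "bword_act X op s (w1 @ w2) = s"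
    using w1 w2 by (simp_all add: bword_perm_append valid_append bword_act_append)
  then show ?thesis unfolding stab_image_def by blast
qed

lemma G_id: "id \<in> stab_image X op s"
  unfolding stab_image_def valid_bword_def by (auto intro!: exI[of _ "[]"])

lemma snd_tstep: "i + 1 < length T \<Longrightarrow> map snd (tstep T (i,e)) = bgen_act X op (map snd T) (i,e)"
proof -
  assume i: "i + 1 < length T"
  obtain A a b C where T: "T = A @ a # b # C" and lA: "length A = i" using split4'[OF i] by blast
  show ?thesis unfolding T lA[symmetric]
    by (cases e) (simp_all add: bgen_act_def nth_append list_update_append)
qed

lemma snd_tact: "valid_bword (length T) w \<Longrightarrow> map snd (tact T w) = bword_act X op (map snd T) w"
proof (induct w arbitrary: T)
  case Nil then show ?case by simp
next
  case (Cons g w)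
  obtain i e where g: "g = (i, e)" by fastforce
  have i: "i + 1 < length T" using Cons(2) g unfolding valid_bword_def by auto
  have v: "valid_bword (length (tstep T g)) w" using Cons(2) unfolding valid_bword_def by simp
  show ?case using Cons(1)[OF v] snd_tstep[OF i] g by simp
qed

lemma fst_tstep: "i + 1 < length T \<Longrightarrow> m < length T \<Longrightarrow> fst (tstep T (i,e) ! m) = fst (T ! transpose i (i+1) m)"
  by (cases e) (auto simp: tstep_def nth_list_update transpose_def)

lemma perm_lt: "valid_bword m w \<Longrightarrow> k < m \<Longrightarrow> bword_perm w k < m"
  by (induct w arbitrary: k) (auto simp: valid_bword_def transpose_def)

lemma perm_ge: "valid_bword m w \<Longrightarrow> m \<le> k \<Longrightarrow> bword_perm w k = k"
  by (induct w arbitrary: k) (auto simp: valid_bword_def transpose_def)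

lemma fst_tact: "valid_bword (length T) w \<Longrightarrow> k < length T \<Longrightarrow> fst (tact T w ! k) = fst (T ! bword_perm w k)"
proof (induct w arbitrary: T)
  case Nil then show ?case by simp
next
  case (Cons g w)
  obtain i e where g: "g = (i, e)" by fastforce
  have i: "i + 1 < length T" using Cons(2) g unfolding valid_bword_def by auto
  have v: "valid_bword (length (tstep T g)) w" using Cons(2) unfolding valid_bword_def by simp
  have v': "valid_bword (length T) w" using Cons(2) unfolding valid_bword_def by simp
  have lt: "bword_perm w k < length T" using perm_lt[OF v' Cons(3)] .
  show ?case using Cons(1)[OF v] Cons(3) fst_tstep[OF i lt, of e] g by simp
qed

lemma G_from_reach:
  assumes "reach T0 T" "map snd T = s"
  shows "(\<lambda>k. if k < length s then fst (T ! k) else k) \<in> stab_image X op s"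
proof -
  obtain w where w: "valid_bword (length T0) w" "tact T0 w = T" using assms(1) unfolding reach_def by blast
  have "bword_act X op s w = s" using snd_tact[OF w(1)] w(2) assms(2) by simp
  moreover have "bword_perm w = (\<lambda>k. if k < length s then fst (T ! k) else k)"
  proof
    fix k show "bword_perm w k = (if k < length s then fst (T ! k) else k)"
    proof (cases "k < length s")
      case True
      have "fst (T ! k) = fst (T0 ! bword_perm w k)" using fst_tact[OF w(1)] True w(2) by simp
      also have "\<dots> = bword_perm w k" using T0_nth perm_lt[OF w(1)] True by simp
      finally show ?thesis using True by simp
    next
      case False then show ?thesis using perm_ge[OF w(1)] by simp
    qed
  qed
  ultimately show ?thesis using w(1) unfolding stab_image_def by (intro CollectI exI[of _ w]) simp
qed

lemma tact_apfst: "valid_bword (length T) w \<Longrightarrow> tact (map (apfst f) T) w = map (apfst f) (tact T w)"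
proof (induct w arbitrary: T)
  case Nil then show ?case by simp
next
  case (Cons g w)
  obtain i e where g: "g = (i, e)" by fastforce
  have i: "i + 1 < length T" using Cons(2) g unfolding valid_bword_def by auto
  obtain A a b C where T: "T = A @ a # b # C" and lA: "length A = i" using split4'[OF i] by blast
  have st: "tstep (map (apfst f) T) g = map (apfst f) (tstep T g)"
  proof (cases e)
    case True
    have "tstep (map (apfst f) T) g = tstep (map (apfst f) A @ apfst f a # apfst f b # map (apfst f) C) (length (map (apfst f) A), True)"
      unfolding T g lA[symmetric] using True by simp
    also have "\<dots> = map (apfst f) A @ apfst f b # (fst (apfst f a), op (snd (apfst f a)) (snd (apfst f b))) # map (apfst f) C"
      by (rule tstep_midT)
    also have "\<dots> = map (apfst f) (tstep T g)" unfolding T g lA[symmetric] using True by simp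
    finally show ?thesis .
  next
    case False
    have "tstep (map (apfst f) T) g = tstep (map (apfst f) A @ apfst f a # apfst f b # map (apfst f) C) (length (map (apfst f) A), False)"
      unfolding T g lA[symmetric] using False by simp
    also have "\<dots> = map (apfst f) A @ (fst (apfst f b), qrinv X op (snd (apfst f b)) (snd (apfst f a))) # apfst f a # map (apfst f) C"
      by (rule tstep_midF)
    also have "\<dots> = map (apfst f) (tstep T g)" unfolding T g lA[symmetric] using False by simp
    finally show ?thesis .
  qed
  have v: "valid_bword (length (tstep T g)) w" using Cons(2) unfolding valid_bword_def by simp
  show ?case using Cons(1)[OF v] st by simp
qed

lemma map_apfst_id: "(\<forall>e\<in>set L. fst e \<noteq> i \<and> fst e \<noteq> j) \<Longrightarrow> map (apfst (transpose i j)) L = L"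
proof (induct L)
  case Nil then show ?case by simp
next
  case (Cons e L)
  obtain k v where e: "e = (k, v)" by fastforce
  have "transpose i j k = k" using Cons(2) e by simp
  then show ?case using Cons e by simp
qed

lemma Eq_aux:
  assumes r: "reach T0 T" and T: "T = A @ (i,x) # B @ (j,x) # C" and ij: "i \<noteq> j"
  shows "transpose i j \<in> stab_image X op s"
proof -
  note props = reach_T0[OF r]
  define \<tau> where "\<tau> = transpose i j"
  have r1: "reach T (A @ (j,x) # B @ (i,x) # C)" using swap_far props(1) T by simp
  have dist: "distinct (map fst A @ i # map fst B @ j # map fst C)" using props(3) T by simp
  have "\<forall>e\<in>set A. fst e \<noteq> i \<and> fst e \<noteq> j" "\<forall>e\<in>set B. fst e \<noteq> i \<and> fst e \<noteq> j" "\<forall>e\<in>set C. fst e \<noteq> i \<and> fst e \<noteq> j"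
    using dist by auto
  then have m: "map (apfst \<tau>) A = A" "map (apfst \<tau>) B = B" "map (apfst \<tau>) C = C"
    unfolding \<tau>_def using map_apfst_id[of A i j] map_apfst_id[of B i j] map_apfst_id[of C i j] by simp_all
  have eq: "A @ (j,x) # B @ (i,x) # C = map (apfst \<tau>) T"
    unfolding T using m by (simp add: \<tau>_def)
  have r2: "reach T T0" using reach_sym[OF r T0_inX] .
  then obtain w where w: "valid_bword (length T) w" "tact T w = T0" unfolding reach_def by blast
  have "tact (map (apfst \<tau>) T) w = map (apfst \<tau>) T0" using tact_apfst[OF w(1)] w(2) by simp
  then have r3: "reach (map (apfst \<tau>) T) (map (apfst \<tau>) T0)" using w(1) unfolding reach_def by auto
  have r4: "reach T0 (map (apfst \<tau>) T0)" using reach_trans[OF reach_trans[OF r r1]] r3 eq by simp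
  have "map snd (map (apfst \<tau>) T0) = s" by (simp add: o_def)
  then have inG: "(\<lambda>k. if k < length s then fst (map (apfst \<tau>) T0 ! k) else k) \<in> stab_image X op s"
    using G_from_reach[OF r4] by blast
  have ilt: "i < length s" "j < length s" using props(4) T by auto
  have "(\<lambda>k. if k < length s then fst (map (apfst \<tau>) T0 ! k) else k) = \<tau>"
  proof
    fix k show "(if k < length s then fst (map (apfst \<tau>) T0 ! k) else k) = \<tau> k"
      using ilt T0_nth unfolding \<tau>_def by (auto simp: transpose_def)
  qed
  then show ?thesis using inG \<tau>_def by simp
qed

lemma Eq_G:
  assumes r: "reach T0 T" and "(i,x) \<in> set T" "(j,x) \<in> set T" "i \<noteq> j"
  shows "transpose i j \<in> stab_image X op s"
proof -
  obtain A R where T: "T = A @ (i,x) # R" using assms(2) by (meson split_list)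
  have "(j,x) \<in> set A \<or> (j,x) \<in> set R" using assms(3,4) T by auto
  then show ?thesis
  proof
    assume "(j,x) \<in> set A"
    then obtain A' B where "A = A' @ (j,x) # B" by (meson split_list)
    then have "T = A' @ (j,x) # B @ (i,x) # R" using T by simp
    then have "transpose j i \<in> stab_image X op s" using Eq_aux[OF r] assms(4) by simp
    then show ?thesis by (simp add: transpose_commute)
  next
    assume "(j,x) \<in> set R"
    then obtain B C where "R = B @ (j,x) # C" by (meson split_list)
    then show ?thesis using Eq_aux[OF r] assms(4) T by simp
  qed
qed

definition rel :: "nat \<Rightarrow> nat \<Rightarrow> bool" where
  "rel i j \<longleftrightarrow> i = j \<or> transpose i j \<in> stab_image X op s"

lemma rel_refl: "rel i i" unfolding rel_def by simp
lemma rel_sym: "rel i j \<Longrightarrow> rel j i" unfolding rel_def by (auto simp: transpose_commute)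
lemma rel_trans: assumes "rel i j" "rel j l" shows "rel i l"
proof (cases "i = j \<or> j = l \<or> i = l")
  case True then show ?thesis using assms rel_refl by auto
next
  case False
  then have t: "transpose i j \<in> stab_image X op s" "transpose j l \<in> stab_image X op s" using assms unfolding rel_def by auto
  have "transpose i j \<circ> transpose j l \<circ> transpose i j = transpose i l"
    using False by (intro transpose_comp_triple) auto
  moreover have "transpose i j \<circ> transpose j l \<circ> transpose i j \<in> stab_image X op s"
    using G_comp t by blast
  ultimately show ?thesis unfolding rel_def by simp
qed

lemma rel_Eq: "reach T0 T \<Longrightarrow> (i,x) \<in> set T \<Longrightarrow> (j,x) \<in> set T \<Longrightarrow> rel i j"
  using Eq_G rel_def by blast

end



context qctx_s begin

lemma comp_props:
  assumes "t \<in> X"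
  shows "Rel `` {t} \<in> qcomponents X op" "finite (Rel `` {t})" "Rel `` {t} \<subseteq> X" "t \<in> Rel `` {t}"
proof -
  show "Rel `` {t} \<in> qcomponents X op" unfolding qcomponents_def Rel_def[symmetric]
    using assms by (rule quotientI)
  show "Rel `` {t} \<subseteq> X" using Rel_X assms by blast
  then show "finite (Rel `` {t})" using finX finite_subset by blast
  show "t \<in> Rel `` {t}" unfolding Rel_def by simp
qed

lemma comp_form: "C \<in> qcomponents X op \<Longrightarrow> \<exists>c\<in>X. C = Rel `` {c}"
  unfolding qcomponents_def Rel_def quotient_def by blast

lemma build:
  "reach T0 (P @ R) \<Longrightarrow> set ts \<subseteq> X \<Longrightarrow>
   (\<forall>C\<in>qcomponents X op. cnt C R \<ge> 2 * ord * (length ts + card X)) \<Longrightarrow>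
   \<exists>D R'. reach (P @ R) (P @ D @ R') \<and> (\<forall>t\<in>set ts. \<exists>A Y B. D = A @ Y @ B \<and> isblk t Y) \<and>
     (\<forall>C\<in>qcomponents X op. cnt C R' + 2 * ord * length ts \<ge> cnt C R)"
proof (induct ts arbitrary: P R)
  case Nil then show ?case by (intro exI[of _ "[]"] exI[of _ R]) simp
next
  case (Cons t ts)
  have tX: "t \<in> X" using Cons(3) by simp
  define Ct where "Ct = Rel `` {t}"
  have Ct: "Ct \<in> qcomponents X op" "finite Ct" "Ct \<subseteq> X" "t \<in> Ct"
    using comp_props[OF tX] unfolding Ct_def by auto
  have cardC: "card Ct \<le> card X" using card_mono[OF finX Ct(3)] .
  have c0: "cnt Ct R \<ge> 2 * ord * (length (t # ts) + card X)" using Cons(4) Ct(1) by blast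
  have m1: "card Ct * (2 * ord) \<le> card X * (2 * ord)" using cardC by (rule mult_le_mono1)
  have m2: "card X * (2 * ord) \<le> 2 * ord * (length (t # ts) + card X)" by (simp add: algebra_simps)
  have "length (filter (\<lambda>e. snd e \<in> Ct) R) \<ge> card Ct * (2 * ord)"
    using c0 m1 m2 unfolding cnt_def by linarith
  then obtain y where y: "y \<in> Ct" "length (filter (\<lambda>e. snd e = y) R) \<ge> 2 * ord"
    using pigeon[OF Ct(2)] Ct(4) by blast
  obtain Y R1 where g: "reach (P @ R) (P @ Y @ R1)" "length Y = 2 * ord" "\<forall>e\<in>set Y. snd e = y"
    using gather[OF y(2), of P] by blast
  have yX: "y \<in> X" using y Ct by auto
  have rY: "reach T0 (P @ Y @ R1)" using reach_trans[OF Cons(2) g(1)] .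
  note pr = reach_T0[OF rY]
  have ixPR: "inX (P @ R)" using reach_T0(1)[OF Cons(2)] .
  define Y1 where "Y1 = take ord Y"
  define Y2 where "Y2 = drop ord Y"
  have YY: "Y = Y1 @ Y2" by (simp add: Y1_def Y2_def)
  have b1: "isblk y Y1" "isblk y Y2" using g(2,3) unfolding isblk_def Y1_def Y2_def
    by (auto dest: in_set_takeD in_set_dropD)
  have Y2ne: "Y2 \<noteq> []" using b1(2) ord_pos unfolding isblk_def by auto
  then obtain e2 where e2: "e2 \<in> set Y2" by (meson list.set_sel(1))
  have e2y: "snd e2 = y" using e2 b1(2) unfolding isblk_def by simp
  have yt: "(y, t) \<in> Rel" using y(1) Rel_sym unfolding Ct_def by auto
  define S where "S = snd ` set (P @ Y @ R1)"
  have SX: "S \<subseteq> X" using pr(1) unfolding S_def inX_def by auto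
  have gS: "qgen S" using pr(5) unfolding S_def .
  have path: "(y, t) \<in> (Pos S)\<^sup>*" using gen_Rel[OF SX gS yt] .
  have s1: "snd ` set Y1 \<subseteq> snd ` set Y2"
  proof
    fix v assume "v \<in> snd ` set Y1"
    then have "v = y" using b1(1) unfolding isblk_def by auto
    then show "v \<in> snd ` set Y2" using e2 e2y by force
  qed
  have Ssub: "S \<subseteq> snd ` set (P @ (Y2 @ R1))" unfolding S_def YY using s1 by auto
  have ixD: "inX (P @ (Y2 @ R1))" using pr(1) YY by simp
  obtain Y1' where c: "reach (P @ Y1 @ (Y2 @ R1)) (P @ Y1' @ (Y2 @ R1))" "isblk t Y1'"
    using conv_path[OF path Ssub b1(1) yX ixD] by blast
  have r2: "reach T0 ((P @ Y1' @ Y2) @ R1)" using reach_trans[OF rY] c(1) YY by simp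
  have cntR: "cnt C R1 + 2 * ord \<ge> cnt C R" if C: "C \<in> qcomponents X op" for C
  proof -
    have "cnt C (P @ Y @ R1) = cnt C (P @ R)"
      using reach_cnt[OF g(1) ixPR] comp_closed[OF C] by blast
    moreover have "cnt C Y \<le> 2 * ord" using cnt_le[of C Y] g(2) by simp
    ultimately show ?thesis by simp
  qed
  have IHc: "\<forall>C\<in>qcomponents X op. cnt C R1 \<ge> 2 * ord * (length ts + card X)"
  proof
    fix C assume C: "C \<in> qcomponents X op"
    have "cnt C R \<ge> 2 * ord * (length (t # ts) + card X)" using Cons(4) C by blast
    moreover have "2 * ord * (length (t # ts) + card X) = 2 * ord * (length ts + card X) + 2 * ord"
      by (simp add: algebra_simps)
    ultimately show "cnt C R1 \<ge> 2 * ord * (length ts + card X)" using cntR[OF C] by linarith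
  qed
  obtain D' R' where ih: "reach ((P @ Y1' @ Y2) @ R1) ((P @ Y1' @ Y2) @ D' @ R')"
    "\<forall>t\<in>set ts. \<exists>A Y B. D' = A @ Y @ B \<and> isblk t Y"
    "\<forall>C\<in>qcomponents X op. cnt C R' + 2 * ord * length ts \<ge> cnt C R1"
    using Cons(1)[OF r2 _ IHc] Cons(3) by auto
  have "reach (P @ R) (P @ (Y1' @ Y2 @ D') @ R')"
  proof -
    have "reach (P @ R) (P @ Y1 @ Y2 @ R1)" using g(1) YY by simp
    moreover have "reach (P @ Y1 @ Y2 @ R1) (P @ Y1' @ Y2 @ R1)" using c(1) by simp
    moreover have "reach (P @ Y1' @ Y2 @ R1) (P @ (Y1' @ Y2 @ D') @ R')" using ih(1) by simp
    ultimately show ?thesis using reach_trans by blast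
  qed
  moreover have "\<forall>t'\<in>set (t # ts). \<exists>A Y B. Y1' @ Y2 @ D' = A @ Y @ B \<and> isblk t' Y"
  proof
    fix t' assume "t' \<in> set (t # ts)"
    then have "t' = t \<or> t' \<in> set ts" by simp
    then show "\<exists>A Y B. Y1' @ Y2 @ D' = A @ Y @ B \<and> isblk t' Y"
    proof
      assume "t' = t" then show ?thesis using c(2) by (intro exI[of _ "[]"] exI[of _ Y1'] exI[of _ "Y2 @ D'"]) simp
    next
      assume "t' \<in> set ts"
      then obtain A Y B where "D' = A @ Y @ B" "isblk t' Y" using ih(2) by blast
      then show ?thesis by (intro exI[of _ "Y1' @ Y2 @ A"] exI[of _ Y] exI[of _ B]) simp
    qed
  qed
  moreover have "\<forall>C\<in>qcomponents X op. cnt C R' + 2 * ord * length (t # ts) \<ge> cnt C R"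
  proof
    fix C assume C: "C \<in> qcomponents X op"
    have "2 * ord * length (t # ts) = 2 * ord * length ts + 2 * ord" by simp
    then show "cnt C R' + 2 * ord * length (t # ts) \<ge> cnt C R" using ih(3) C cntR[OF C] by fastforce
  qed
  ultimately show ?case by blast
qed

end


context qctx_s begin

lemma main_rel:
  assumes cnts: "\<forall>C\<in>qcomponents X op. cnt C T0 \<ge> 6 * ord * card X"
    and ij: "i < length s" "j < length s" "(s ! i, s ! j) \<in> Rel"
  shows "rel i j"
proof -
  obtain xs where xs: "set xs = X" "distinct xs" using finite_distinct_list[OF finX] by blast
  have lxs: "length xs = card X" using distinct_card xs by fastforce
  define K where "K = ord * card X"
  have K1: "2 * ord * (length xs + card X) = 4 * K" unfolding K_def lxs by (simp add: algebra_simps)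
  have K2: "6 * ord * card X = 6 * K" unfolding K_def by (simp add: algebra_simps)
  have K3: "2 * ord * length xs = 2 * K" unfolding K_def lxs by (simp add: algebra_simps)
  have c1: "\<forall>C\<in>qcomponents X op. cnt C T0 \<ge> 2 * ord * (length xs + card X)"
  proof
    fix C assume C: "C \<in> qcomponents X op"
    have "cnt C T0 \<ge> 6 * ord * card X" using cnts C by blast
    then show "cnt C T0 \<ge> 2 * ord * (length xs + card X)" using K1 K2 by linarith
  qed
  obtain D1 R1 where b1: "reach ([] @ T0) ([] @ D1 @ R1)" "\<forall>t\<in>set xs. \<exists>A Y B. D1 = A @ Y @ B \<and> isblk t Y"
    "\<forall>C\<in>qcomponents X op. cnt C R1 + 2 * ord * length xs \<ge> cnt C T0"
    using build[of "[]" T0 xs] c1 xs(1) by auto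
  have rD1: "reach T0 (D1 @ R1)" using b1(1) by simp
  have c2: "\<forall>C\<in>qcomponents X op. cnt C R1 \<ge> 2 * ord * (length xs + card X)"
  proof
    fix C assume C: "C \<in> qcomponents X op"
    have "cnt C T0 \<ge> 6 * ord * card X" using cnts C by blast
    moreover have "cnt C R1 + 2 * ord * length xs \<ge> cnt C T0" using b1(3) C by blast
    ultimately show "cnt C R1 \<ge> 2 * ord * (length xs + card X)" using K1 K2 K3 by linarith
  qed
  obtain D2 R2 where b2: "reach (D1 @ R1) (D1 @ D2 @ R2)" "\<forall>t\<in>set xs. \<exists>A Y B. D2 = A @ Y @ B \<and> isblk t Y"
    using build[of D1 R1 xs] rD1 c2 xs(1) by auto
  define T2 where "T2 = D1 @ D2 @ R2"
  have r2: "reach T0 T2" using reach_trans[OF rD1 b2(1)] unfolding T2_def .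
  note pr = reach_T0[OF r2]
  have blocks: "\<exists>A1 Y1 A2 Y2 A3. T2 = A1 @ Y1 @ A2 @ Y2 @ A3 \<and> isblk y Y1 \<and> isblk y Y2" if y: "y \<in> X" for y
  proof -
    obtain A Y B where 1: "D1 = A @ Y @ B" "isblk y Y" using b1(2) y xs(1) by blast
    obtain A' Y' B' where 2: "D2 = A' @ Y' @ B'" "isblk y Y'" using b2(2) y xs(1) by blast
    show ?thesis using 1 2 unfolding T2_def
      by (intro exI[of _ A] exI[of _ Y] exI[of _ "B @ A'"] exI[of _ Y'] exI[of _ "B' @ R2"]) simp
  qed
  have blk_elem: "\<exists>e\<in>set T2. snd e = y" if y: "y \<in> X" for y
  proof -
    obtain A1 Y1 A2 Y2 A3 where T: "T2 = A1 @ Y1 @ A2 @ Y2 @ A3" "isblk y Y1" using blocks[OF y] by blast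
    have "Y1 \<noteq> []" using T(2) ord_pos unfolding isblk_def by auto
    then obtain e where "e \<in> set Y1" by (meson list.set_sel(1))
    then show ?thesis using T unfolding isblk_def by auto
  qed
  have F: "\<exists>k'. (k', op b y) \<in> set T2 \<and> rel k k'" if kb: "(k,b) \<in> set T2" and y: "y \<in> X" for k b y
  proof -
    have bX: "b \<in> X" using pr(1) kb unfolding inX_def by auto
    obtain A1 Y1 A2 Y2 A3 where T: "T2 = A1 @ Y1 @ A2 @ Y2 @ A3" "isblk y Y1" "isblk y Y2"
      using blocks[OF y] by blast
    have disj: "set Y1 \<inter> set Y2 = {}" using pr(7) T(1) by auto
    obtain A Y D where AYD: "T2 = A @ Y @ D" "isblk y Y" "(k,b) \<in> set (A @ D)"
    proof (cases "(k,b) \<in> set Y1")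
      case False
      then show ?thesis using that[of A1 Y1 "A2 @ Y2 @ A3"] T kb by auto
    next
      case True
      then have "(k,b) \<notin> set Y2" using disj by auto
      then show ?thesis using that[of "A1 @ Y1 @ A2" Y2 A3] T kb by auto
    qed
    have ix: "inX (A @ Y @ D)" using pr(1) AYD(1) by simp
    obtain T3 where t3: "reach (A @ Y @ D) T3" "(k, op b y) \<in> set T3" "set (A @ Y @ D) - {(k,b)} \<subseteq> set T3"
      using L5[OF AYD(2) y ix AYD(3)] by blast
    have r3: "reach T0 T3" using reach_trans[OF r2] t3(1) AYD(1) by simp
    show ?thesis
    proof (cases "op b y = b")
      case True then show ?thesis using kb rel_refl by auto
    next
      case False
      have oX: "op b y \<in> X" using opX bX y by blast
      obtain e where e: "e \<in> set T2" "snd e = op b y" using blk_elem[OF oX] by blast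
      have "e \<noteq> (k,b)" using e False by auto
      then have "e \<in> set T3" using t3(3) e(1) AYD(1) by auto
      then have "(fst e, op b y) \<in> set T3" using e(2) by (metis prod.collapse)
      then have "rel k (fst e)" using rel_Eq[OF r3 t3(2)] by blast
      moreover have "(fst e, op b y) \<in> set T2" using e by (metis prod.collapse)
      ultimately show ?thesis by blast
    qed
  qed
  have chain: "(b, b') \<in> (Pos X)\<^sup>* \<Longrightarrow> (k,b) \<in> set T2 \<Longrightarrow> \<exists>k'. (k', b') \<in> set T2 \<and> rel k k'" for b b' k
  proof (induct rule: rtrancl_induct)
    case base then show ?case using rel_refl by blast
  next
    case (step b1 b2)
    obtain k1 where k1: "(k1, b1) \<in> set T2" "rel k k1" using step by blast
    obtain d where d: "d \<in> X" "b2 = op b1 d" using step(2) unfolding Pos_def by blast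
    obtain k2 where "(k2, op b1 d) \<in> set T2" "rel k1 k2" using F[OF k1(1) d(1)] by blast
    then show ?case using k1 d rel_trans by blast
  qed
  have "i \<in> set (map fst T2)" "j \<in> set (map fst T2)" using pr(4) ij by auto
  then obtain xi xj where xij: "(i, xi) \<in> set T2" "(j, xj) \<in> set T2" by auto
  have "(s ! i, xi) \<in> Rel" "(s ! j, xj) \<in> Rel" using pr(2) xij by fastforce+
  then have "(xi, xj) \<in> Rel" using ij(3) Rel_sym Rel_trans by blast
  moreover have "qgen X" unfolding qgen_def by blast
  ultimately have "(xi, xj) \<in> (Pos X)\<^sup>*" using gen_Rel by blast
  then obtain k' where "(k', xj) \<in> set T2" "rel i k'" using chain xij(1) by blast
  moreover have "rel k' j" using rel_Eq[OF r2 \<open>(k', xj) \<in> set T2\<close> xij(2)] .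
  ultimately show ?thesis using rel_trans by blast
qed

lemma perm_permutes: "valid_bword m w \<Longrightarrow> bword_perm w permutes {0..<m}"
proof (induct w)
  case Nil then show ?case using permutes_id[of "{0..<m}"] by (simp add: id_def)
next
  case (Cons g w)
  have "fst g \<in> {0..<m}" "fst g + 1 \<in> {0..<m}" using Cons(2) unfolding valid_bword_def by auto
  then have tr: "transpose (fst g) (fst g + 1) permutes {0..<m}" by (rule permutes_swap_id)
  have bw: "bword_perm w permutes {0..<m}" using Cons unfolding valid_bword_def by simp
  show ?case using permutes_compose[OF bw tr] by (simp only: bword_perm.simps)
qed

lemma G_sub:
  assumes "p \<in> stab_image X op s"
  shows "p permutes {0..<length s} \<and> (\<forall>C\<in>qcomponents X op. p ` posin s C = posin s C)"
proof -
  obtain w where w: "p = bword_perm w" "valid_bword (length s) w" "bword_act X op s w = s"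
    using assms unfolding stab_image_def by blast
  have pp: "p permutes {0..<length s}" using perm_permutes[OF w(2)] w(1) by simp
  define T where "T = tact T0 w"
  have r: "reach T0 T" unfolding reach_def T_def using w(2) by auto
  have sT: "map snd T = s" using snd_tact[of T0 w] w(2,3) unfolding T_def by simp
  have lT: "length T = length s" unfolding T_def by simp
  have rel_m: "(s ! (p m), s ! m) \<in> Rel" if m: "m < length s" for m
  proof -
    have f: "fst (T ! m) = p m" using fst_tact[of T0 w m] w(1,2) m T0_nth perm_lt[OF w(2) m] unfolding T_def by simp
    have sn: "snd (T ! m) = s ! m" using sT m lT by (metis nth_map)
    have "T ! m \<in> set T" using m lT by simp
    then have "(s ! fst (T ! m), snd (T ! m)) \<in> Rel" using reach_T0(2)[OF r] by blast
    then show ?thesis using f sn by simp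
  qed
  have "p ` posin s C = posin s C" if C: "C \<in> qcomponents X op" for C
  proof -
    obtain c where c: "C = Rel `` {c}" using comp_form[OF C] by blast
    have iff: "s ! m \<in> C \<longleftrightarrow> s ! (p m) \<in> C" if m: "m < length s" for m
    proof -
      have r1: "(s ! (p m), s ! m) \<in> Rel" using rel_m[OF m] .
      have r2: "(s ! m, s ! (p m)) \<in> Rel" using Rel_sym[OF r1] .
      show ?thesis
      proof
        assume "s ! m \<in> C"
        then have "(c, s ! m) \<in> Rel" unfolding c by simp
        then have "(c, s ! (p m)) \<in> Rel" using Rel_trans r2 by blast
        then show "s ! (p m) \<in> C" unfolding c by simp
      next
        assume "s ! (p m) \<in> C"
        then have "(c, s ! (p m)) \<in> Rel" unfolding c by simp
        then have "(c, s ! m) \<in> Rel" using Rel_trans r1 by blast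
        then show "s ! m \<in> C" unfolding c by simp
      qed
    qed
    show ?thesis
    proof
      show "p ` posin s C \<subseteq> posin s C"
        using iff permutes_in_image[OF pp] unfolding posin_def by auto
      show "posin s C \<subseteq> p ` posin s C"
      proof
        fix m' assume m': "m' \<in> posin s C"
        then have "m' \<in> p ` {0..<length s}" using permutes_image[OF pp] unfolding posin_def by auto
        then obtain m where m: "m < length s" "m' = p m" by auto
        then show "m' \<in> p ` posin s C" using iff[OF m(1)] m' unfolding posin_def by auto
      qed
    qed
  qed
  then show ?thesis using pp by blast
qed

lemma transpose_image_same: "(a \<in> P \<longleftrightarrow> b \<in> P) \<Longrightarrow> transpose a b ` P = P"
proof -
  assume ab: "a \<in> P \<longleftrightarrow> b \<in> P"
  have sub: "transpose a b ` P \<subseteq> P"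
  proof
    fix z assume "z \<in> transpose a b ` P"
    then obtain x where x: "x \<in> P" "z = transpose a b x" by blast
    show "z \<in> P"
    proof (cases "x = a")
      case True then show ?thesis using x ab by simp
    next
      case False
      show ?thesis
      proof (cases "x = b")
        case True then show ?thesis using x ab by simp
      next
        case False then show ?thesis using x \<open>x \<noteq> a\<close> by simp
      qed
    qed
  qed
  have "P \<subseteq> transpose a b ` P"
  proof
    fix x assume x: "x \<in> P"
    have t: "transpose a b x \<in> P" using subsetD[OF sub imageI[OF x]] .
    show "x \<in> transpose a b ` P"
    proof (rule image_eqI[where x = "transpose a b x"])
      show "x = transpose a b (transpose a b x)" by simp
      show "transpose a b x \<in> P" using t .
    qed
  qed
  then show ?thesis using sub by blast
qed

lemma RHS_sub:
  assumes cnts: "\<forall>C\<in>qcomponents X op. cnt C T0 \<ge> 6 * ord * card X"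
  shows "p permutes {0..<length s} \<Longrightarrow> (\<forall>C\<in>qcomponents X op. p ` posin s C = posin s C) \<Longrightarrow> p \<in> stab_image X op s"
proof (induct "card {k. p k \<noteq> k}" arbitrary: p rule: less_induct)
  case less
  show ?case
  proof (cases "p = id")
    case True then show ?thesis using G_id by simp
  next
    case False
    then have "\<exists>k. p k \<noteq> k" by (auto simp: fun_eq_iff)
    then obtain k where k: "p k \<noteq> k" by blast
    have kn: "k < length s" using less(2) k unfolding permutes_def by auto
    have pkn: "p k < length s" using permutes_in_image[OF less(2)] kn by simp
    have skX: "s ! k \<in> X" using sX kn by auto
    define C where "C = Rel `` {s ! k}"
    have C: "C \<in> qcomponents X op" "s ! k \<in> C" using comp_props[OF skX] unfolding C_def by auto
    have "k \<in> posin s C" using kn C unfolding posin_def by simp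
    then have "p k \<in> posin s C" using less(3) C(1) by blast
    then have "s ! (p k) \<in> C" unfolding posin_def by simp
    then have "(s ! k, s ! (p k)) \<in> Rel" unfolding C_def by simp
    then have "rel k (p k)" using main_rel[OF cnts kn pkn] by blast
    then have tr: "transpose k (p k) \<in> stab_image X op s" using k unfolding rel_def by auto
    define q where "q = transpose k (p k) \<circ> p"
    have inj: "inj p" using permutes_inj[OF less(2)] .
    have qp: "q permutes {0..<length s}" unfolding q_def
      using permutes_compose[OF less(2) permutes_swap_id] kn pkn by simp
    have qC: "\<forall>C\<in>qcomponents X op. q ` posin s C = posin s C"
    proof
      fix C' assume C': "C' \<in> qcomponents X op"
      have pP: "p ` posin s C' = posin s C'" using less(3) C' by blast
      have "k \<in> posin s C' \<longleftrightarrow> p k \<in> posin s C'"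
      proof
        assume "k \<in> posin s C'" then show "p k \<in> posin s C'" using pP by blast
      next
        assume "p k \<in> posin s C'"
        then obtain m where "m \<in> posin s C'" "p k = p m" using pP by (metis imageE)
        then show "k \<in> posin s C'" using inj by (metis injD)
      qed
      then have tP: "transpose k (p k) ` posin s C' = posin s C'" by (rule transpose_image_same)
      have "q ` posin s C' = transpose k (p k) ` (p ` posin s C')" unfolding q_def by (rule image_comp[symmetric])
      then show "q ` posin s C' = posin s C'" using pP tP by simp
    qed
    have supp: "{x. q x \<noteq> x} \<subseteq> {x. p x \<noteq> x} - {k}"
    proof
      fix x assume x: "x \<in> {x. q x \<noteq> x}"
      have "q k = k" unfolding q_def by simp
      then have xk: "x \<noteq> k" using x by auto
      have "p x \<noteq> x"
      proof
        assume px: "p x = x"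
        have "x \<noteq> p k" using px xk inj by (metis injD)
        then have "q x = x" unfolding q_def using px xk by simp
        then show False using x by simp
      qed
      then show "x \<in> {x. p x \<noteq> x} - {k}" using xk by simp
    qed
    have fin: "finite {x. p x \<noteq> x}"
      using less(2) unfolding permutes_def by (metis (mono_tags, lifting) finite_atLeastLessThan finite_subset mem_Collect_eq subsetI)
    have "card {x. q x \<noteq> x} < card {x. p x \<noteq> x}"
    proof -
      have "card {x. q x \<noteq> x} \<le> card ({x. p x \<noteq> x} - {k})" using card_mono[OF _ supp] fin by simp
      also have "\<dots> < card {x. p x \<noteq> x}" using card_Diff1_less[OF fin, of k] k by blast
      finally show ?thesis .
    qed
    then have qG: "q \<in> stab_image X op s" using less(1) qp qC by blast
    have "p = transpose k (p k) \<circ> q" unfolding q_def by (simp add: comp_assoc[symmetric])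
    then show ?thesis using G_comp[OF tr qG] by simp
  qed
qed

lemma cnt_T0: "cnt C T0 = card (posin s C)"
proof -
  have "cnt C T0 = length (filter (\<lambda>k. s ! k \<in> C) [0..<length s])"
    unfolding cnt_def T0_def by (simp add: filter_map o_def)
  also have "\<dots> = card (set (filter (\<lambda>k. s ! k \<in> C) [0..<length s]))"
    by (rule distinct_card[symmetric]) simp
  also have "set (filter (\<lambda>k. s ! k \<in> C) [0..<length s]) = posin s C"
    unfolding posin_def by auto
  finally show ?thesis .
qed

end

theorem corollary4p37:
  fixes X :: "'a set" and op :: "'a \<Rightarrow> 'a \<Rightarrow> 'a"
  assumes "finite X" and "quandle X op"
  shows "\<exists>N::nat. \<forall>s :: 'a list.
           qgenerates X op s \<and> (\<forall>C\<in>qcomponents X op. card (posin s C) \<ge> N)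
           \<longrightarrow> stab_image X op s =
               {p. p permutes {0..<length s} \<and> (\<forall>C\<in>qcomponents X op. p ` posin s C = posin s C)}"
proof -
  interpret q: qctx X op using assms by unfold_locales
  show ?thesis
  proof (intro exI[of _ "6 * q.ord * card X"] allI impI)
    fix s assume H: "qgenerates X op s \<and> (\<forall>C\<in>qcomponents X op. card (posin s C) \<ge> 6 * q.ord * card X)"
    have sX: "set s \<subseteq> X" using H unfolding qgenerates_def by blast
    interpret qs: qctx_s X op s using assms sX H by unfold_locales auto
    have cnts: "\<forall>C\<in>qcomponents X op. q.cnt C qs.T0 \<ge> 6 * q.ord * card X"
      using H qs.cnt_T0 by simp
    show "stab_image X op s =
               {p. p permutes {0..<length s} \<and> (\<forall>C\<in>qcomponents X op. p ` posin s C = posin s C)}"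
      using qs.G_sub qs.RHS_sub[OF cnts] by blast
  qed
qed



end
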